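(* Let $y\in\mathbb{R}^n$ and $X\in\mathbb{R}^{n\times p}$ with columns $x_1,\dots,x_p$ satisfying $\|x_j\|_2=1$ for all $j$, and let $\lambda>0$. Let $(\hat\beta_0,\hat\beta^+,\hat\beta^-,\hat\Theta)$ be a solution of the strong hierarchical lasso, respectively of the weak hierarchical lasso (both defined in the context, with the quadratic loss and no elastic net penalty). Let $\hat y=\hat\beta_0\mathbf{1}+X(\hat\beta^+-\hat\beta^-)+\frac12\sum_{j\neq k}\hat\Theta_{jk}(x_j*x_k)$ be the fitted values and define the partial residuals $$r^{(-j)}=y-\hat y+x_j(\hat\beta^+_j-\hat\beta^-_j),\qquad r^{(-jk)}=y-\hat y+(x_j*x_k)\,\frac{\hat\Theta_{jk}+\hat\Theta_{kj}}{2}.$$ Then: (Strong) for the strong hierarchical lasso there exist $\hat\alpha_1,\dots,\hat\alpha_p\ge 0$, with $\hat\alpha_j=0$ whenever $\|\hat\Theta_j\|_1<\hat\beta^+_j+\hat\beta^-_j$, such that for all $j$ and all $k\neq j$ $$\hat\beta^+_j-\hat\beta^-_j=\mathcal S\big(x_j^Tr^{(-j)},\lambda-\hat\alpha_j\big),\qquad \hat\Theta_{jk}=\frac{\mathcal S\big[(x_j*x_k)^Tr^{(-jk)},\ \lambda+\hat\alpha_j+\hat\alpha_k\big]}{\|x_j*x_k\|^2};$$ (Weak) for the weak hierarchical lasso there exist $\tilde\alpha_1,\dots,\tilde\alpha_p\ge 0$, with $\tilde\alpha_j=0$ whenever $\|\hat\Theta_j\|_1<\hat\beta^+_j+\hat\beta^-_j$,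 such that for all $j$ and all $k\ne j$ $$\hat\beta^+_j-\hat\beta^-_j=\mathcal S\big(x_j^Tr^{(-j)},\lambda-\tilde\alpha_j\big),\qquad \frac{\hat\Theta_{jk}+\hat\Theta_{kj}}{2}=\frac{\mathcal S\big[(x_j*x_k)^Tr^{(-jk)},\ \lambda+2\min\{\tilde\alpha_j,\tilde\alpha_k\}\big]}{\|x_j*x_k\|^2}.$$
   Context: $*$ denotes the elementwise product of vectors, $\mathbf 1\in\mathbb{R}^n$ the all-ones vector, and $\mathcal S(c,\lambda)=\mathrm{sign}(c)(|c|-\lambda)_+$ the soft-thresholding operator. For a matrix $\Theta\in\mathbb{R}^{p\times p}$, $\Theta_j$ denotes its $j$th row and $\|\Theta\|_1=\sum_{j\neq k}|\Theta_{jk}|$. Write $X_{i\cdot}$ for the $i$th row of $X$. The quadratic loss is $q(\beta_0,\beta,\Theta)=\frac12\sum_{i=1}^n\big(y_i-\beta_0-X_{i\cdot}\beta-\frac12X_{i\cdot}\Theta X_{i\cdot}^T\big)^2$. The strong hierarchical lasso is the problem: minimize over $\beta_0\in\mathbb{R}$, $\beta^+,\beta^-\in\mathbb{R}^p$, $\Theta\in\mathbb{R}^{p\times p}$ with $\Theta_{jj}=0$ for all $j$, the objective $q(\beta_0,\beta^+-\beta^-,\Theta)+\lambda\mathbf 1^T(\beta^++\beta^-)+\frac{\lambda}{2}\|\Theta\|_1$ subject to $\Theta=\Theta^T$ and, for each $j=1,\dots,p$, $\|\Theta_j\|_1\le\beta^+_j+\beta^-_j$, $\beta^+_j\ge0$,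 $\beta^-_j\ge0$. The weak hierarchical lasso is the same problem without the symmetry constraint $\Theta=\Theta^T$. *)

theory Defs
  imports "HOL-Analysis.Analysis"
begin

text \<open>Observations are indexed by the finite type 'n, features by the finite type 'p.
  The design matrix is X :: real^'p^'n (n rows, p columns); column j is column j X.\<close>

definition soft_thr :: "real \<Rightarrow> real \<Rightarrow> real" where
  "soft_thr c l = sgn c * max (\<bar>c\<bar> - l) 0"

definition hprod :: "real^'n \<Rightarrow> real^'n \<Rightarrow> real^'n" where
  "hprod u v = (\<chi> i. u $ i * v $ i)"

definition ones :: "real^'n" where
  "ones = (\<chi> i. 1)"

definition quad_loss :: "real^'n \<Rightarrow> real^'p^'n \<Rightarrow> real \<Rightarrow> real^'p \<Rightarrow> real^'p^'p \<Rightarrow> real" where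
  "quad_loss y X b0 b Th =
     (1/2) * (\<Sum>i\<in>UNIV. (y $ i - b0 - (X $ i) \<bullet> b - (1/2) * ((X $ i) \<bullet> (Th *v (X $ i))))\<^sup>2)"

definition offdiag_l1 :: "real^'p^'p \<Rightarrow> real" where
  "offdiag_l1 Th = (\<Sum>j\<in>UNIV. \<Sum>k\<in>UNIV - {j}. \<bar>Th $ j $ k\<bar>)"

definition row_l1 :: "real^'p^'p \<Rightarrow> 'p \<Rightarrow> real" where
  "row_l1 Th j = (\<Sum>k\<in>UNIV. \<bar>Th $ j $ k\<bar>)"

definition hier_obj :: "real \<Rightarrow> real^'n \<Rightarrow> real^'p^'n \<Rightarrow> real \<Rightarrow> real^'p \<Rightarrow> real^'p \<Rightarrow> real^'p^'p \<Rightarrow> real" where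
  "hier_obj lam y X b0 bp bm Th =
     quad_loss y X b0 (bp - bm) Th + lam * (\<Sum>j\<in>UNIV. bp $ j + bm $ j) + (lam / 2) * offdiag_l1 Th"

definition weak_feasible :: "real^'p \<Rightarrow> real^'p \<Rightarrow> real^'p^'p \<Rightarrow> bool" where
  "weak_feasible bp bm Th \<longleftrightarrow>
     (\<forall>j. Th $ j $ j = 0) \<and>
     (\<forall>j. row_l1 Th j \<le> bp $ j + bm $ j \<and> bp $ j \<ge> 0 \<and> bm $ j \<ge> 0)"

definition strong_feasible :: "real^'p \<Rightarrow> real^'p \<Rightarrow> real^'p^'p \<Rightarrow> bool" where
  "strong_feasible bp bm Th \<longleftrightarrow> weak_feasible bp bm Th \<and> transpose Th = Th"

definition weak_hier_solution ::
  "real \<Rightarrow> real^'n \<Rightarrow> real^'p^'n \<Rightarrow> real \<Rightarrow> real^'p \<Rightarrow> real^'p \<Rightarrow> real^'p^'p \<Rightarrow> bool" where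
  "weak_hier_solution lam y X b0 bp bm Th \<longleftrightarrow>
     weak_feasible bp bm Th \<and>
     (\<forall>b0' bp' bm' Th'. weak_feasible bp' bm' Th' \<longrightarrow>
        hier_obj lam y X b0 bp bm Th \<le> hier_obj lam y X b0' bp' bm' Th')"

definition strong_hier_solution ::
  "real \<Rightarrow> real^'n \<Rightarrow> real^'p^'n \<Rightarrow> real \<Rightarrow> real^'p \<Rightarrow> real^'p \<Rightarrow> real^'p^'p \<Rightarrow> bool" where
  "strong_hier_solution lam y X b0 bp bm Th \<longleftrightarrow>
     strong_feasible bp bm Th \<and>
     (\<forall>b0' bp' bm' Th'. strong_feasible bp' bm' Th' \<longrightarrow>
        hier_obj lam y X b0 bp bm Th \<le> hier_obj lam y X b0' bp' bm' Th')"

definition fitted :: "real^'p^'n \<Rightarrow> real \<Rightarrow> real^'p \<Rightarrow> real^'p \<Rightarrow> real^'p^'p \<Rightarrow> real^'n" where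
  "fitted X b0 bp bm Th =
     b0 *\<^sub>R ones + X *v (bp - bm)
     + (1/2) *\<^sub>R (\<Sum>j\<in>UNIV. \<Sum>k\<in>UNIV - {j}. (Th $ j $ k) *\<^sub>R hprod (column j X) (column k X))"

definition res_main :: "real^'n \<Rightarrow> real^'p^'n \<Rightarrow> real \<Rightarrow> real^'p \<Rightarrow> real^'p \<Rightarrow> real^'p^'p \<Rightarrow> 'p \<Rightarrow> real^'n" where
  "res_main y X b0 bp bm Th j =
     y - fitted X b0 bp bm Th + (bp $ j - bm $ j) *\<^sub>R column j X"

definition res_int :: "real^'n \<Rightarrow> real^'p^'n \<Rightarrow> real \<Rightarrow> real^'p \<Rightarrow> real^'p \<Rightarrow> real^'p^'p \<Rightarrow> 'p \<Rightarrow> 'p \<Rightarrow> real^'n" where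
  "res_int y X b0 bp bm Th j k =
     y - fitted X b0 bp bm Th + ((Th $ j $ k + Th $ k $ j) / 2) *\<^sub>R hprod (column j X) (column k X)"

end

theory Submission
  imports Defs
begin


definition dd :: "real \<Rightarrow> real \<Rightarrow> real" where
  "dd x d = (if x = 0 then \<bar>d\<bar> else sgn x * d)"

lemma dd_zero[simp]: "dd x 0 = 0" by (simp add: dd_def)

lemma abs_lin:
  assumes "0 \<le> t" "x = 0 \<or> t * \<bar>d\<bar> \<le> \<bar>x\<bar>"
  shows "\<bar>x + t * d\<bar> = \<bar>x\<bar> + t * dd x d"
proof -
  have h: "\<bar>t*d\<bar> = t*\<bar>d\<bar>" using assms(1) by (simp add: abs_mult)
  have h2: "-\<bar>t*d\<bar> \<le> t*d" "t*d \<le> \<bar>t*d\<bar>" by linarith+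
  show ?thesis
  proof (cases "x = 0")
    case True thus ?thesis using h by (simp add: dd_def)
  next
    case False
    hence le: "t * \<bar>d\<bar> \<le> \<bar>x\<bar>" using assms(2) by auto
    show ?thesis
    proof (cases "x > 0")
      case True
      hence "x + t*d \<ge> 0" using le h h2 by linarith
      thus ?thesis using True by (simp add: dd_def)
    next
      case c2: False
      hence "x < 0" using False by linarith
      hence "x + t*d \<le> 0" using le h h2 by linarith
      thus ?thesis using \<open>x < 0\<close> by (simp add: dd_def)
    qed
  qed
qed

lemma inner_mv: "(v::real^'p) \<bullet> (Th *v v) = (\<Sum>a\<in>UNIV. \<Sum>b\<in>UNIV. v$a * Th$a$b * v$b)"
  by (simp add: inner_vec_def matrix_vector_mult_def sum_distrib_left mult.assoc)

lemma ev_nonneg_lim: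
  assumes "eventually (\<lambda>t. 0 \<le> t * A + t^2 * B) (at_right (0::real))"
  shows "0 \<le> A"
proof (rule ccontr)
  assume "\<not> 0 \<le> A"
  hence A: "A < 0" by simp
  from assms obtain b where b: "b > 0" "\<And>t. t > 0 \<Longrightarrow> t < b \<Longrightarrow> 0 \<le> t * A + t^2 * B"
    unfolding eventually_at_right[OF zero_less_one] by auto
  define t where "t = min (b/2) (-A / (2*(\<bar>B\<bar>+1)))"
  have "-A / (2*(\<bar>B\<bar>+1)) > 0" using A by (intro divide_pos_pos) auto
  hence t0: "t > 0" using b by (simp add: t_def)
  have tb: "t < b" using b by (simp add: t_def)
  have "t * \<bar>B\<bar> \<le> -A/2"
  proof -
    have "t \<le> -A / (2*(\<bar>B\<bar>+1))" by (simp add: t_def)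
    hence "t * (2*(\<bar>B\<bar>+1)) \<le> -A / (2*(\<bar>B\<bar>+1)) * (2*(\<bar>B\<bar>+1))"
      by (intro mult_right_mono) auto
    moreover have "-A / (2*(\<bar>B\<bar>+1)) * (2*(\<bar>B\<bar>+1)) = -A"
    proof -
      have "0 \<le> \<bar>B\<bar>" by simp
      hence "(2*(\<bar>B\<bar>+1)) > 0" by (intro mult_pos_pos) auto
      hence "(2*(\<bar>B\<bar>+1)) \<noteq> 0" by simp
      thus ?thesis by (metis nonzero_eq_divide_eq)
    qed
    ultimately have "t * (2*(\<bar>B\<bar>+1)) \<le> -A" by simp
    hence "2*(t*\<bar>B\<bar>) + 2*t \<le> -A" by (simp add: algebra_simps)
    thus ?thesis using t0 by linarith
  qed
  moreover have "t * B \<le> t * \<bar>B\<bar>" using t0 by (intro mult_left_mono) auto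
  ultimately have "t * B \<le> -A/2" by linarith
  hence "A + t*B < 0" using A by linarith
  hence "t * (A + t*B) < 0" using t0 by (simp add: mult_pos_neg)
  moreover have "0 \<le> t * A + t^2 * B" using b(2)[OF t0 tb] .
  ultimately show False by (simp add: power2_eq_square algebra_simps)
qed

lemma ev_lin: "a < (b::real) \<Longrightarrow> eventually (\<lambda>t. a + t*c < b) (at_right (0::real))"
proof -
  assume "a < b"
  have "((\<lambda>t. a + t*c) \<longlongrightarrow> a + 0*c) (at_right (0::real))"
    by (intro tendsto_intros)
  hence "((\<lambda>t. a + t*c) \<longlongrightarrow> a) (at_right (0::real))" by simp
  thus ?thesis using \<open>a < b\<close> by (rule order_tendstoD(2))
qed

lemma mv_add_scale: "((Th::real^'p^'p) + t *\<^sub>R D) *v v = Th *v v + t *\<^sub>R (D *v v)"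
  by (simp add: vec_eq_iff matrix_vector_mult_def sum.distrib sum_distrib_left algebra_simps)

definition resid :: "real^'n \<Rightarrow> real^'p^'n \<Rightarrow> real \<Rightarrow> real^'p \<Rightarrow> real^'p^'p \<Rightarrow> 'n \<Rightarrow> real" where
  "resid y X b0 b Th i = y $ i - b0 - (X $ i) \<bullet> b - (1/2) * ((X $ i) \<bullet> (Th *v (X $ i)))"

definition lin :: "real^'p^'n \<Rightarrow> real^'p \<Rightarrow> real^'p^'p \<Rightarrow> 'n \<Rightarrow> real" where
  "lin X db D i = (X $ i) \<bullet> db + (1/2) * ((X $ i) \<bullet> (D *v (X $ i)))"

lemma quad_expand:
  "quad_loss y X b0 (b + t *\<^sub>R db) (Th + t *\<^sub>R D) =
   quad_loss y X b0 b Th - t * (\<Sum>i\<in>UNIV. resid y X b0 b Th i * lin X db D i)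
     + t^2 * ((1/2) * (\<Sum>i\<in>UNIV. (lin X db D i)^2))"
proof -
  have "\<And>i. y $ i - b0 - (X $ i) \<bullet> (b + t *\<^sub>R db) - (1/2) * ((X $ i) \<bullet> ((Th + t *\<^sub>R D) *v (X $ i)))
     = resid y X b0 b Th i - t * lin X db D i"
    unfolding mv_add_scale by (simp add: resid_def lin_def inner_add_right algebra_simps)
  hence "quad_loss y X b0 (b + t *\<^sub>R db) (Th + t *\<^sub>R D) =
     (1/2) * (\<Sum>i\<in>UNIV. (resid y X b0 b Th i - t * lin X db D i)^2)"
    by (simp add: quad_loss_def)
  also have "\<dots> = (1/2) * (\<Sum>i\<in>UNIV. (resid y X b0 b Th i)^2) - t * (\<Sum>i\<in>UNIV. resid y X b0 b Th i * lin X db D i)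
     + t^2 * ((1/2) * (\<Sum>i\<in>UNIV. (lin X db D i)^2))"
    by (simp add: power2_diff sum.distrib sum_subtractf sum_distrib_left algebra_simps power_mult_distrib)
  also have "(1/2) * (\<Sum>i\<in>UNIV. (resid y X b0 b Th i)^2) = quad_loss y X b0 b Th"
    by (simp add: quad_loss_def resid_def)
  finally show ?thesis .
qed

lemma ev_pos: "0 < (a::real) \<Longrightarrow> eventually (\<lambda>t. 0 < a + t*c) (at_right (0::real))"
  using ev_lin[of "-a" 0 "-c"] by (auto elim: eventually_mono)

lemma FO:
  fixes y :: "real^'n" and X :: "real^'p^'n"
  assumes feas: "weak_feasible bp bm Th"
    and opt: "\<forall>bp' bm' Th'. weak_feasible bp' bm' Th' \<and> P Th' \<longrightarrow>
               hier_obj lam y X b0 bp bm Th \<le> hier_obj lam y X b0 bp' bm' Th'"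
    and PD: "\<And>t. P (Th + t *\<^sub>R D)"
    and dp: "\<And>j. dbp$j < 0 \<Longrightarrow> bp$j > 0"
    and dm: "\<And>j. dbm$j < 0 \<Longrightarrow> bm$j > 0"
    and ddiag: "\<And>j. D$j$j = 0"
    and tight: "\<And>j. row_l1 Th j = bp$j + bm$j \<Longrightarrow>
                     (\<Sum>k\<in>UNIV. dd (Th$j$k) (D$j$k)) \<le> dbp$j + dbm$j"
  shows "0 \<le> - (\<Sum>i\<in>UNIV. resid y X b0 (bp - bm) Th i * lin X (dbp - dbm) D i)
             + lam * (\<Sum>j\<in>UNIV. dbp$j + dbm$j)
             + lam/2 * (\<Sum>j\<in>UNIV. \<Sum>k\<in>UNIV - {j}. dd (Th$j$k) (D$j$k))"
proof -
  define A where "A = - (\<Sum>i\<in>UNIV. resid y X b0 (bp - bm) Th i * lin X (dbp - dbm) D i)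
             + lam * (\<Sum>j\<in>UNIV. dbp$j + dbm$j)
             + lam/2 * (\<Sum>j\<in>UNIV. \<Sum>k\<in>UNIV - {j}. dd (Th$j$k) (D$j$k))"
  define B where "B = (1/2) * (\<Sum>i\<in>UNIV. (lin X (dbp - dbm) D i)^2)"
  define S1 where "S1 j = (\<Sum>k\<in>UNIV. dd (Th$j$k) (D$j$k))" for j
  have E0: "eventually (\<lambda>t. 0 < t) (at_right (0::real))" by (rule eventually_at_right_less)
  have E1: "eventually (\<lambda>t. \<forall>j k. Th$j$k = 0 \<or> t * \<bar>D$j$k\<bar> \<le> \<bar>Th$j$k\<bar>) (at_right (0::real))"
  proof (intro eventually_all_finite)
    fix j k
    show "eventually (\<lambda>t. Th$j$k = 0 \<or> t * \<bar>D$j$k\<bar> \<le> \<bar>Th$j$k\<bar>) (at_right (0::real))"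
    proof (cases "Th$j$k = 0")
      case True thus ?thesis by simp
    next
      case False
      hence "0 < \<bar>Th$j$k\<bar>" by simp
      from ev_lin[OF this, of "\<bar>D$j$k\<bar>"] show ?thesis
        by (rule eventually_mono) simp
    qed
  qed
  have E2: "eventually (\<lambda>t. \<forall>j. 0 \<le> bp$j + t * dbp$j) (at_right (0::real))"
  proof (intro eventually_all_finite)
    fix j
    show "eventually (\<lambda>t. 0 \<le> bp$j + t * dbp$j) (at_right (0::real))"
    proof (cases "dbp$j < 0")
      case True
      from ev_pos[OF dp[OF True], of "dbp$j"] show ?thesis by (auto elim: eventually_mono)
    next
      case False
      have "0 \<le> bp$j" using feas by (simp add: weak_feasible_def)
      with False show ?thesis using E0 by (auto elim!: eventually_mono)
    qed
  qed
  have E3: "eventually (\<lambda>t. \<forall>j. 0 \<le> bm$j + t * dbm$j) (at_right (0::real))"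
  proof (intro eventually_all_finite)
    fix j
    show "eventually (\<lambda>t. 0 \<le> bm$j + t * dbm$j) (at_right (0::real))"
    proof (cases "dbm$j < 0")
      case True
      from ev_pos[OF dm[OF True], of "dbm$j"] show ?thesis by (auto elim: eventually_mono)
    next
      case False
      have "0 \<le> bm$j" using feas by (simp add: weak_feasible_def)
      with False show ?thesis using E0 by (auto elim!: eventually_mono)
    qed
  qed
  have E4: "eventually (\<lambda>t. \<forall>j. row_l1 Th j + t * S1 j \<le> bp$j + bm$j + t * (dbp$j + dbm$j)) (at_right (0::real))"
  proof (intro eventually_all_finite)
    fix j
    have le: "row_l1 Th j \<le> bp$j + bm$j" using feas by (simp add: weak_feasible_def)
    show "eventually (\<lambda>t. row_l1 Th j + t * S1 j \<le> bp$j + bm$j + t * (dbp$j + dbm$j)) (at_right (0::real))"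
    proof (cases "row_l1 Th j = bp$j + bm$j")
      case True
      hence "S1 j \<le> dbp$j + dbm$j" using tight by (simp add: S1_def)
      thus ?thesis using True E0 by (auto elim!: eventually_mono intro: mult_left_mono)
    next
      case False
      hence "row_l1 Th j - (bp$j + bm$j) < 0" using le by simp
      from ev_lin[OF this, of "S1 j - (dbp$j + dbm$j)"] show ?thesis
        by (auto elim!: eventually_mono simp: algebra_simps)
    qed
  qed
  have "eventually (\<lambda>t. 0 \<le> t * A + t^2 * B) (at_right (0::real))"
    using E0 E1 E2 E3 E4
  proof eventually_elim
    case (elim t)
    have absl: "\<And>j k. \<bar>Th$j$k + t * D$j$k\<bar> = \<bar>Th$j$k\<bar> + t * dd (Th$j$k) (D$j$k)"
      using elim(1,2) by (intro abs_lin) auto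
    have rowl: "row_l1 (Th + t *\<^sub>R D) j = row_l1 Th j + t * S1 j" for j
      by (simp add: row_l1_def S1_def absl sum.distrib sum_distrib_left)
    have feas': "weak_feasible (bp + t *\<^sub>R dbp) (bm + t *\<^sub>R dbm) (Th + t *\<^sub>R D)"
      using feas elim ddiag unfolding weak_feasible_def by (simp add: rowl algebra_simps)
    have offl: "offdiag_l1 (Th + t *\<^sub>R D) = offdiag_l1 Th +
        t * (\<Sum>j\<in>UNIV. \<Sum>k\<in>UNIV - {j}. dd (Th$j$k) (D$j$k))"
      by (simp add: offdiag_l1_def absl sum.distrib sum_distrib_left)
    have bb: "(bp + t *\<^sub>R dbp) - (bm + t *\<^sub>R dbm) = (bp - bm) + t *\<^sub>R (dbp - dbm)"
      by (simp add: algebra_simps)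
    have "hier_obj lam y X b0 (bp + t *\<^sub>R dbp) (bm + t *\<^sub>R dbm) (Th + t *\<^sub>R D)
          = hier_obj lam y X b0 bp bm Th + t * A + t^2 * B"
      unfolding hier_obj_def bb quad_expand offl A_def B_def
      by (simp add: sum.distrib sum_distrib_left algebra_simps)
    moreover have "hier_obj lam y X b0 bp bm Th \<le> hier_obj lam y X b0 (bp + t *\<^sub>R dbp) (bm + t *\<^sub>R dbm) (Th + t *\<^sub>R D)"
      using opt feas' PD by blast
    ultimately show ?case by simp
  qed
  thus ?thesis unfolding A_def[symmetric] by (rule ev_nonneg_lim)
qed

definition cc where "cc y X b0 bp bm Th j = column j X \<bullet> (y - fitted X b0 bp bm Th)"
definition gg where "gg y X b0 bp bm Th j k = hprod (column j X) (column k X) \<bullet> (y - fitted X b0 bp bm Th)"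

lemma resid_eq:
  fixes y :: "real^'n" and X :: "real^'p^'n"
  assumes diag: "\<And>j. Th$j$j = 0"
  shows "resid y X b0 (bp - bm) Th i = (y - fitted X b0 bp bm Th) $ i"
proof -
  have "\<And>a. (\<Sum>b\<in>UNIV - {a}. X$i$a * Th$a$b * X$i$b) = (\<Sum>b\<in>UNIV. X$i$a * Th$a$b * X$i$b)"
    using diag by (simp add: sum_diff1)
  hence "(\<Sum>j\<in>UNIV. \<Sum>k\<in>UNIV - {j}. Th $ j $ k * (X$i$j * X$i$k)) = (X $ i) \<bullet> (Th *v (X $ i))"
    by (simp add: inner_mv algebra_simps)
  thus ?thesis
    by (simp add: resid_def fitted_def ones_def hprod_def column_def matrix_vector_mult_def
          inner_vec_def algebra_simps)
qed

lemma L_formula: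
  fixes y :: "real^'n" and X :: "real^'p^'n"
  assumes diag: "\<And>j. Th$j$j = 0"
  shows "(\<Sum>i\<in>UNIV. resid y X b0 (bp - bm) Th i * lin X db D i)
    = (\<Sum>j\<in>UNIV. db$j * cc y X b0 bp bm Th j) + (1/2) * (\<Sum>j\<in>UNIV. \<Sum>k\<in>UNIV. D$j$k * gg y X b0 bp bm Th j k)"
proof -
  define r where "r = y - fitted X b0 bp bm Th"
  have "(\<Sum>i\<in>UNIV. resid y X b0 (bp - bm) Th i * lin X db D i) = (\<Sum>i\<in>UNIV. r$i * lin X db D i)"
    by (rule sum.cong[OF refl]) (simp add: r_def resid_eq[OF diag])
  also have "\<dots> = (\<Sum>i\<in>UNIV. \<Sum>j\<in>UNIV. r$i * X$i$j * db$j) + (1/2) * (\<Sum>i\<in>UNIV. \<Sum>j\<in>UNIV. \<Sum>k\<in>UNIV. r$i * X$i$j * D$j$k * X$i$k)"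
    by (simp add: lin_def inner_vec_def matrix_vector_mult_def sum_distrib_left sum.distrib algebra_simps)
  also have "(\<Sum>i\<in>UNIV. \<Sum>j\<in>UNIV. r$i * X$i$j * db$j) = (\<Sum>j\<in>UNIV. db$j * cc y X b0 bp bm Th j)"
    by (subst sum.swap) (simp add: cc_def r_def[symmetric] inner_vec_def column_def sum_distrib_left algebra_simps)
  also have "(\<Sum>i\<in>UNIV. \<Sum>j\<in>UNIV. \<Sum>k\<in>UNIV. r$i * X$i$j * D$j$k * X$i$k) = (\<Sum>j\<in>UNIV. \<Sum>k\<in>UNIV. D$j$k * gg y X b0 bp bm Th j k)"
  proof -
    have "(\<Sum>i\<in>UNIV. \<Sum>j\<in>UNIV. \<Sum>k\<in>UNIV. r$i * X$i$j * D$j$k * X$i$k) = (\<Sum>j\<in>UNIV. \<Sum>i\<in>UNIV. \<Sum>k\<in>UNIV. r$i * X$i$j * D$j$k * X$i$k)"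
      by (rule sum.swap)
    also have "\<dots> = (\<Sum>j\<in>UNIV. \<Sum>k\<in>UNIV. \<Sum>i\<in>UNIV. r$i * X$i$j * D$j$k * X$i$k)"
      by (rule sum.cong[OF refl], rule sum.swap)
    finally show ?thesis
      by (simp add: gg_def r_def[symmetric] inner_vec_def column_def hprod_def sum_distrib_left algebra_simps)
  qed
  finally show ?thesis .
qed

lemma FO2:
  fixes y :: "real^'n" and X :: "real^'p^'n"
  assumes feas: "weak_feasible bp bm Th"
    and opt: "\<forall>bp' bm' Th'. weak_feasible bp' bm' Th' \<and> P Th' \<longrightarrow>
               hier_obj lam y X b0 bp bm Th \<le> hier_obj lam y X b0 bp' bm' Th'"
    and PD: "\<And>t. P (Th + t *\<^sub>R D)"
    and dp: "\<And>j. dbp$j < 0 \<Longrightarrow> bp$j > 0"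
    and dm: "\<And>j. dbm$j < 0 \<Longrightarrow> bm$j > 0"
    and ddiag: "\<And>j. D$j$j = 0"
    and tight: "\<And>j. row_l1 Th j = bp$j + bm$j \<Longrightarrow>
                     (\<Sum>k\<in>UNIV. dd (Th$j$k) (D$j$k)) \<le> dbp$j + dbm$j"
  shows "0 \<le> - ((\<Sum>j\<in>UNIV. (dbp$j - dbm$j) * cc y X b0 bp bm Th j) + (1/2) * (\<Sum>j\<in>UNIV. \<Sum>k\<in>UNIV. D$j$k * gg y X b0 bp bm Th j k))
             + lam * (\<Sum>j\<in>UNIV. dbp$j + dbm$j)
             + lam/2 * (\<Sum>j\<in>UNIV. \<Sum>k\<in>UNIV - {j}. dd (Th$j$k) (D$j$k))"
proof -
  have diag: "\<And>j. Th$j$j = 0" using feas by (simp add: weak_feasible_def)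
  show ?thesis using FO[where P=P and D=D and dbp=dbp and dbm=dbm and y=y and X=X and ?b0.0=b0 and lam=lam, OF feas opt PD dp dm ddiag tight] L_formula[OF diag, of y X b0 bp bm "dbp - dbm" D]
    by simp
qed

definition ev :: "'p \<Rightarrow> real \<Rightarrow> real^'p" where "ev j a = (\<chi> m. if m = j then a else 0)"

lemma ev_sum1[simp]: "(\<Sum>m\<in>UNIV. (ev j a)$m * f m) = a * f j"
proof -
  have "\<And>m. (ev j a)$m * f m = (if m = j then a * f j else 0)" by (simp add: ev_def)
  thus ?thesis by simp
qed
lemma ev_sum2[simp]: "(\<Sum>m\<in>UNIV. (ev j a)$m) = a"
  by (simp add: ev_def)
lemma ifz_mult[simp]: "(if P then a else 0) * x = (if P then a*x else (0::real))" by simp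
lemma ifz_diff[simp]: "(if P then a else 0) - (if P then b else 0) = (if P then a - b else (0::real))" by simp
lemma ifz_add[simp]: "(if P then a else 0) + (if P then b else 0) = (if P then a + b else (0::real))" by simp
lemma ifz_neg[simp]: "- (if P then a else 0) = (if P then -a else (0::real))" by simp
lemma ev_comp[simp]: "(ev j a)$m = (if m = j then a else 0)" by (simp add: ev_def)

lemma common:
  fixes y :: "real^'n" and X :: "real^'p^'n" and j :: 'p
  assumes feas: "weak_feasible bp bm Th"
    and opt: "\<forall>bp' bm' Th'. weak_feasible bp' bm' Th' \<and> P Th' \<longrightarrow>
               hier_obj lam y X b0 bp bm Th \<le> hier_obj lam y X b0 bp' bm' Th'"
    and PTh: "P Th"
  defines "c \<equiv> cc y X b0 bp bm Th j"
  shows "\<bar>c\<bar> \<le> lam" "bp$j > 0 \<Longrightarrow> c \<ge> 0" "bm$j > 0 \<Longrightarrow> c \<le> 0"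
    "row_l1 Th j < bp$j + bm$j \<Longrightarrow> bp$j > 0 \<Longrightarrow> c \<ge> lam"
    "row_l1 Th j < bp$j + bm$j \<Longrightarrow> bm$j > 0 \<Longrightarrow> c \<le> -lam"
proof -
  have PD: "\<And>t. P (Th + t *\<^sub>R 0)" using PTh by simp
  note F = FO2[where P=P and D=0 and y=y and X=X and ?b0.0=b0 and lam=lam, OF feas opt PD]
  have "0 \<le> - c + lam" using F[of "ev j 1" 0] by (auto simp: c_def split: if_splits)
  moreover have "0 \<le> c + lam" using F[of 0 "ev j 1"] by (auto simp: c_def split: if_splits)
  ultimately show "\<bar>c\<bar> \<le> lam" by linarith
  show "bp$j > 0 \<Longrightarrow> c \<ge> 0" using F[of "ev j (-1)" "ev j 1"] by (auto simp: c_def split: if_splits)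
  show "bm$j > 0 \<Longrightarrow> c \<le> 0" using F[of "ev j 1" "ev j (-1)"] by (auto simp: c_def split: if_splits)
  show "c \<ge> lam" if s: "row_l1 Th j < bp$j + bm$j" and b: "bp$j > 0"
  proof -
    have p1: "\<And>ja. (ev j (-1))$ja < 0 \<Longrightarrow> 0 < bp$ja" using b by (auto split: if_splits)
    have p2: "\<And>ja. (0::real^'p)$ja < 0 \<Longrightarrow> 0 < bm$ja" by simp
    have p3: "\<And>ja. (0::real^'p^'p)$ja$ja = 0" by simp
    have p4: "\<And>ja. row_l1 Th ja = bp$ja + bm$ja \<Longrightarrow> (\<Sum>k\<in>UNIV. dd (Th$ja$k) ((0::real^'p^'p)$ja$k)) \<le> (ev j (-1))$ja + (0::real^'p)$ja"
      using s by auto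
    show ?thesis using F[of "ev j (-1)" 0, OF p1 p2 p3 p4] by (simp add: c_def)
  qed
  show "c \<le> -lam" if s: "row_l1 Th j < bp$j + bm$j" and b: "bm$j > 0"
  proof -
    have p1: "\<And>ja. (0::real^'p)$ja < 0 \<Longrightarrow> 0 < bp$ja" by simp
    have p2: "\<And>ja. (ev j (-1))$ja < 0 \<Longrightarrow> 0 < bm$ja" using b by (auto split: if_splits)
    have p3: "\<And>ja. (0::real^'p^'p)$ja$ja = 0" by simp
    have p4: "\<And>ja. row_l1 Th ja = bp$ja + bm$ja \<Longrightarrow> (\<Sum>k\<in>UNIV. dd (Th$ja$k) ((0::real^'p^'p)$ja$k)) \<le> (0::real^'p)$ja + (ev j (-1))$ja"
      using s by auto
    show ?thesis using F[of 0 "ev j (-1)", OF p1 p2 p3 p4] by (simp add: c_def)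
  qed
qed

lemma psum: fixes j k :: "'p::finite" shows "j \<noteq> k \<Longrightarrow> (\<Sum>m\<in>UNIV. if m = j \<or> m = k then f m else (0::real)) = f j + f k"
proof -
  assume jk: "j \<noteq> k"
  have "(\<Sum>m\<in>UNIV. if m = j \<or> m = k then f m else (0::real)) = (\<Sum>m\<in>UNIV. (if m = j then f m else 0) + (if m = k then f m else 0))"
    using jk by (intro sum.cong) auto
  thus ?thesis by (simp add: sum.distrib)
qed

lemma dsum: fixes j k :: "'p::finite" shows "j \<noteq> k \<Longrightarrow> (\<Sum>a\<in>UNIV. \<Sum>b\<in>UNIV. if (a = j \<and> b = k) \<or> (a = k \<and> b = j) then F a b else (0::real)) = F j k + F k j"
proof -
  assume jk: "j \<noteq> k"
  have "\<And>a. (\<Sum>b\<in>UNIV. if (a = j \<and> b = k) \<or> (a = k \<and> b = j) then F a b else (0::real))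
     = (if a = j \<or> a = k then (if a = j then F j k else F k j) else 0)"
  proof -
    fix a
    show "(\<Sum>b\<in>UNIV. if (a = j \<and> b = k) \<or> (a = k \<and> b = j) then F a b else (0::real))
     = (if a = j \<or> a = k then (if a = j then F j k else F k j) else 0)"
    proof (cases "a = j")
      case True thus ?thesis using jk by simp
    next
      case False thus ?thesis by (cases "a = k") simp_all
    qed
  qed
  hence "(\<Sum>a\<in>UNIV. \<Sum>b\<in>UNIV. if (a = j \<and> b = k) \<or> (a = k \<and> b = j) then F a b else (0::real))
     = (\<Sum>a\<in>UNIV. if a = j \<or> a = k then (if a = j then F j k else F k j) else 0)" by simp
  also have "\<dots> = F j k + F k j" using psum[OF jk, of "\<lambda>a. if a = j then F j k else F k j"] jk by simp
  finally show ?thesis .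
qed

lemma dsum': fixes j k :: "'p::finite" shows "j \<noteq> k \<Longrightarrow> (\<Sum>a\<in>UNIV. \<Sum>b\<in>UNIV - {a}. if (a = j \<and> b = k) \<or> (a = k \<and> b = j) then F a b else (0::real)) = F j k + F k j"
proof -
  assume jk: "j \<noteq> k"
  have "\<And>a. (\<Sum>b\<in>UNIV - {a}. if (a = j \<and> b = k) \<or> (a = k \<and> b = j) then F a b else (0::real))
     = (\<Sum>b\<in>UNIV. if (a = j \<and> b = k) \<or> (a = k \<and> b = j) then F a b else (0::real))"
    using jk by (auto simp: sum_diff1)
  thus ?thesis using dsum[OF jk] by simp
qed

lemma gg_sym: "gg y X b0 bp bm Th k j = gg y X b0 bp bm Th j k"
  by (simp add: gg_def hprod_def mult.commute)

lemma edge_strong: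
  fixes y :: "real^'n" and X :: "real^'p^'n" and j k :: 'p
  assumes feas: "weak_feasible bp bm Th"
    and opt: "\<forall>bp' bm' Th'. weak_feasible bp' bm' Th' \<and> transpose Th' = Th' \<longrightarrow>
               hier_obj lam y X b0 bp bm Th \<le> hier_obj lam y X b0 bp' bm' Th'"
    and sym: "transpose Th = Th"
    and jk: "j \<noteq> k"
    and sg: "\<bar>s\<bar> = 1" "Th$j$k = 0 \<or> s = sgn (Th$j$k)"
  defines "al \<equiv> \<lambda>m. if row_l1 Th m < bp$m + bm$m then 0 else lam - \<bar>cc y X b0 bp bm Th m\<bar>"
  shows "s * gg y X b0 bp bm Th j k \<le> lam + al j + al k"
proof -
  define c where "c = cc y X b0 bp bm Th"
  define g where "g = gg y X b0 bp bm Th"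
  define tt where "tt m = (row_l1 Th m = bp$m + bm$m)" for m
  have le: "\<And>m. row_l1 Th m \<le> bp$m + bm$m" using feas by (simp add: weak_feasible_def)
  have symTh: "\<And>a b. Th$a$b = Th$b$a" using sym by (metis transpose_def vec_lambda_beta)
  define dbp :: "real^'p" where "dbp = (\<chi> m. if (m = j \<or> m = k) \<and> tt m \<and> c m \<ge> 0 then 1 else 0)"
  define dbm :: "real^'p" where "dbm = (\<chi> m. if (m = j \<or> m = k) \<and> tt m \<and> c m < 0 then 1 else 0)"
  define D :: "real^'p^'p" where "D = (\<chi> a b. if (a = j \<and> b = k) \<or> (a = k \<and> b = j) then s else 0)"
  have ddjk: "dd (Th$j$k) s = 1" "dd (Th$k$j) s = 1" using sg symTh[of j k]
    by (auto simp: dd_def sgn_if split: if_splits)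
  have PD: "\<And>t. transpose (Th + t *\<^sub>R D) = Th + t *\<^sub>R D"
    using symTh unfolding D_def by (auto simp: transpose_def vec_eq_iff)
  have p1: "\<And>m. dbp$m < 0 \<Longrightarrow> 0 < bp$m" by (simp add: dbp_def split: if_splits)
  have p2: "\<And>m. dbm$m < 0 \<Longrightarrow> 0 < bm$m" by (simp add: dbm_def split: if_splits)
  have p3: "\<And>m. D$m$m = 0" using jk by (auto simp: D_def)
  have rowD: "\<And>m. (\<Sum>b\<in>UNIV. dd (Th$m$b) (D$m$b)) = (if m = j \<or> m = k then 1 else 0)"
  proof -
    fix m
    have "\<And>b. dd (Th$m$b) (D$m$b) = (if b = (if m = j then k else j) \<and> (m = j \<or> m = k) then 1 else 0)"
      using ddjk jk by (auto simp: D_def)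
    thus "(\<Sum>b\<in>UNIV. dd (Th$m$b) (D$m$b)) = (if m = j \<or> m = k then 1 else 0)"
      by simp
  qed
  have p4: "\<And>m. row_l1 Th m = bp$m + bm$m \<Longrightarrow> (\<Sum>b\<in>UNIV. dd (Th$m$b) (D$m$b)) \<le> dbp$m + dbm$m"
    by (simp add: rowD dbp_def dbm_def tt_def)
  note F = FO2[where P="\<lambda>T. transpose T = T" and D=D and dbp=dbp and dbm=dbm and y=y and X=X and ?b0.0=b0 and lam=lam, OF feas opt PD p1 p2 p3 p4]
  define f where "f m = (if tt m then \<bar>c m\<bar> else 0)" for m
  define e where "e m = (if tt m then 1 else (0::real))" for m
  have s1: "(\<Sum>m\<in>UNIV. (dbp$m - dbm$m) * cc y X b0 bp bm Th m) = f j + f k"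
  proof -
    have "\<And>m. (dbp$m - dbm$m) * cc y X b0 bp bm Th m = (if m = j \<or> m = k then f m else 0)"
      by (auto simp: dbp_def dbm_def f_def c_def)
    thus ?thesis using psum[OF jk, of f] by simp
  qed
  have s2: "(\<Sum>m\<in>UNIV. dbp$m + dbm$m) = e j + e k"
  proof -
    have "\<And>m. dbp$m + dbm$m = (if m = j \<or> m = k then e m else 0)"
      by (auto simp: dbp_def dbm_def e_def)
    thus ?thesis using psum[OF jk, of e] by simp
  qed
  have s3: "(\<Sum>a\<in>UNIV. \<Sum>b\<in>UNIV. D$a$b * gg y X b0 bp bm Th a b) = 2 * s * g j k"
  proof -
    have "\<And>a b. D$a$b * gg y X b0 bp bm Th a b = (if (a = j \<and> b = k) \<or> (a = k \<and> b = j) then s * g a b else 0)"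
      by (simp add: D_def g_def)
    thus ?thesis using dsum[OF jk, of "\<lambda>a b. s * g a b"] gg_sym[of y X b0 bp bm Th k j] by (simp add: g_def)
  qed
  have s4: "(\<Sum>a\<in>UNIV. \<Sum>b\<in>UNIV - {a}. dd (Th$a$b) (D$a$b)) = 2"
  proof -
    have "\<And>a b. dd (Th$a$b) (D$a$b) = (if (a = j \<and> b = k) \<or> (a = k \<and> b = j) then 1 else 0)"
      using ddjk by (auto simp: D_def)
    thus ?thesis using dsum'[OF jk, of "\<lambda>a b. 1"] by simp
  qed
  have "0 \<le> - ((f j + f k) + (1/2) * (2 * s * g j k)) + lam * (e j + e k) + lam/2 * 2"
    using F unfolding s1 s2 s3 s4 .
  moreover have "\<And>m. lam * e m - f m = al m"
  proof -
    fix m show "lam * e m - f m = al m" using le[of m]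
      by (cases "row_l1 Th m < bp$m + bm$m") (auto simp: al_def e_def f_def tt_def c_def)
  qed
  ultimately show ?thesis by (simp add: g_def algebra_simps)
qed

lemma edge_strong_dec:
  fixes y :: "real^'n" and X :: "real^'p^'n" and j k :: 'p
  assumes feas: "weak_feasible bp bm Th"
    and opt: "\<forall>bp' bm' Th'. weak_feasible bp' bm' Th' \<and> transpose Th' = Th' \<longrightarrow>
               hier_obj lam y X b0 bp bm Th \<le> hier_obj lam y X b0 bp' bm' Th'"
    and sym: "transpose Th = Th"
    and jk: "j \<noteq> k"
    and nz: "Th$j$k \<noteq> 0"
  defines "al \<equiv> \<lambda>m. if row_l1 Th m < bp$m + bm$m then 0 else lam - \<bar>cc y X b0 bp bm Th m\<bar>"
  shows "sgn (Th$j$k) * gg y X b0 bp bm Th j k \<ge> lam + al j + al k"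
proof -
  define s where "s = sgn (Th$j$k)"
  have Pth: "(\<lambda>T. transpose T = T) Th" using sym by simp
  note cm = common[where P="\<lambda>T. transpose T = T", OF feas opt Pth]
  define c where "c = cc y X b0 bp bm Th"
  define g where "g = gg y X b0 bp bm Th"
  define tt where "tt m = (row_l1 Th m = bp$m + bm$m)" for m
  have le: "\<And>m. row_l1 Th m \<le> bp$m + bm$m" using feas by (simp add: weak_feasible_def)
  have symTh: "\<And>a b. Th$a$b = Th$b$a" using sym by (metis transpose_def vec_lambda_beta)
  define dbp :: "real^'p" where "dbp = (\<chi> m. if (m = j \<or> m = k) \<and> tt m \<and> bp$m > 0 then -1 else 0)"
  define dbm :: "real^'p" where "dbm = (\<chi> m. if (m = j \<or> m = k) \<and> tt m \<and> \<not> bp$m > 0 then -1 else 0)"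
  define D :: "real^'p^'p" where "D = (\<chi> a b. if (a = j \<and> b = k) \<or> (a = k \<and> b = j) then -s else 0)"
  have ddjk: "dd (Th$j$k) (-s) = -1" "dd (Th$k$j) (-s) = -1" using nz symTh[of j k]
    by (auto simp: dd_def sgn_if s_def split: if_splits)
  have rowpos: "row_l1 Th m > 0" if "m = j \<or> m = k" for m
  proof -
    have "\<bar>Th$m$(if m = j then k else j)\<bar> \<le> row_l1 Th m" unfolding row_l1_def
      by (rule member_le_sum) auto
    moreover have "\<bar>Th$m$(if m = j then k else j)\<bar> > 0" using nz symTh[of j k] that by auto
    ultimately show ?thesis by linarith
  qed
  have nonneg: "\<And>m. bp$m \<ge> 0" "\<And>m. bm$m \<ge> 0" using feas by (auto simp: weak_feasible_def)
  have PD: "\<And>t. transpose (Th + t *\<^sub>R D) = Th + t *\<^sub>R D"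
    using symTh unfolding D_def by (auto simp: transpose_def vec_eq_iff)
  have p1: "\<And>m. dbp$m < 0 \<Longrightarrow> 0 < bp$m" by (simp add: dbp_def split: if_splits)
  have p2: "\<And>m. dbm$m < 0 \<Longrightarrow> 0 < bm$m"
  proof -
    fix m assume "dbm$m < 0"
    hence h: "(m = j \<or> m = k) \<and> tt m \<and> \<not> bp$m > 0" by (simp add: dbm_def split: if_splits)
    hence "bp$m = 0" using nonneg[of m] by simp
    thus "0 < bm$m" using h rowpos[of m] by (simp add: tt_def)
  qed
  have p3: "\<And>m. D$m$m = 0" using jk by (auto simp: D_def)
  have rowD: "\<And>m. (\<Sum>b\<in>UNIV. dd (Th$m$b) (D$m$b)) = (if m = j \<or> m = k then -1 else 0)"
  proof -
    fix m
    have "\<And>b. dd (Th$m$b) (D$m$b) = (if b = (if m = j then k else j) \<and> (m = j \<or> m = k) then -1 else 0)"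
      using ddjk jk by (auto simp: D_def)
    thus "(\<Sum>b\<in>UNIV. dd (Th$m$b) (D$m$b)) = (if m = j \<or> m = k then -1 else 0)"
      by simp
  qed
  have p4: "\<And>m. row_l1 Th m = bp$m + bm$m \<Longrightarrow> (\<Sum>b\<in>UNIV. dd (Th$m$b) (D$m$b)) \<le> dbp$m + dbm$m"
    by (simp add: rowD dbp_def dbm_def tt_def)
  note F = FO2[where P="\<lambda>T. transpose T = T" and D=D and dbp=dbp and dbm=dbm and y=y and X=X and ?b0.0=b0 and lam=lam, OF feas opt PD p1 p2 p3 p4]
  define f where "f m = (if tt m then - \<bar>c m\<bar> else 0)" for m
  define e where "e m = (if tt m then -1 else (0::real))" for m
  have s1: "(\<Sum>m\<in>UNIV. (dbp$m - dbm$m) * cc y X b0 bp bm Th m) = f j + f k"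
  proof -
    have "\<And>m. (dbp$m - dbm$m) * cc y X b0 bp bm Th m = (if m = j \<or> m = k then f m else 0)"
    proof -
      fix m
      have "bp$m > 0 \<Longrightarrow> c m \<ge> 0" "\<not> bp$m > 0 \<Longrightarrow> tt m \<Longrightarrow> (m = j \<or> m = k) \<Longrightarrow> c m \<le> 0"
        using cm(2)[of m] cm(3)[of m] nonneg[of m] rowpos[of m] by (auto simp: c_def tt_def)
      thus "(dbp$m - dbm$m) * cc y X b0 bp bm Th m = (if m = j \<or> m = k then f m else 0)"
        by (auto simp: dbp_def dbm_def f_def c_def)
    qed
    thus ?thesis using psum[OF jk, of f] by simp
  qed
  have s2: "(\<Sum>m\<in>UNIV. dbp$m + dbm$m) = e j + e k"
  proof -
    have "\<And>m. dbp$m + dbm$m = (if m = j \<or> m = k then e m else 0)"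
      by (auto simp: dbp_def dbm_def e_def)
    thus ?thesis using psum[OF jk, of e] by simp
  qed
  have s3: "(\<Sum>a\<in>UNIV. \<Sum>b\<in>UNIV. D$a$b * gg y X b0 bp bm Th a b) = 2 * (-s) * g j k"
  proof -
    have "\<And>a b. D$a$b * gg y X b0 bp bm Th a b = (if (a = j \<and> b = k) \<or> (a = k \<and> b = j) then (-s) * g a b else 0)"
      by (simp add: D_def g_def)
    thus ?thesis using dsum[OF jk, of "\<lambda>a b. (-s) * g a b"] gg_sym[of y X b0 bp bm Th k j] by (simp add: g_def)
  qed
  have s4: "(\<Sum>a\<in>UNIV. \<Sum>b\<in>UNIV - {a}. dd (Th$a$b) (D$a$b)) = -2"
  proof -
    have "\<And>a b. dd (Th$a$b) (D$a$b) = (if (a = j \<and> b = k) \<or> (a = k \<and> b = j) then -1 else 0)"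
      using ddjk by (auto simp: D_def)
    thus ?thesis using dsum'[OF jk, of "\<lambda>a b. -1"] by simp
  qed
  have I: "0 \<le> - ((f j + f k) + (1/2) * (2 * (-s) * g j k)) + lam * (e j + e k) + lam/2 * (-2)"
    using F unfolding s1 s2 s3 s4 by simp
  have E: "\<And>m. lam * e m - f m = - al m"
  proof -
    fix m show "lam * e m - f m = - al m" using le[of m]
      by (cases "row_l1 Th m < bp$m + bm$m") (auto simp: al_def e_def f_def tt_def c_def)
  qed
  have "lam + (f j + f k) \<le> lam * e j + lam * e k + s * g j k" using I by (simp add: algebra_simps)
  thus ?thesis using E[of j] E[of k] by (simp add: g_def s_def)
qed

lemma edge_weak:
  fixes y :: "real^'n" and X :: "real^'p^'n" and j k :: 'p
  assumes feas: "weak_feasible bp bm Th"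
    and opt: "\<forall>bp' bm' Th'. weak_feasible bp' bm' Th' \<and> True \<longrightarrow>
               hier_obj lam y X b0 bp bm Th \<le> hier_obj lam y X b0 bp' bm' Th'"
    and jk: "j \<noteq> k"
    and sg: "\<bar>s\<bar> = 1" "Th$j$k = 0 \<or> s = sgn (Th$j$k)"
  defines "al \<equiv> \<lambda>m. if row_l1 Th m < bp$m + bm$m then 0 else lam - \<bar>cc y X b0 bp bm Th m\<bar>"
  shows "s * gg y X b0 bp bm Th j k \<le> lam + 2 * al j"
proof -
  define c where "c = cc y X b0 bp bm Th"
  define g where "g = gg y X b0 bp bm Th"
  define tt where "tt m = (row_l1 Th m = bp$m + bm$m)" for m
  have le: "\<And>m. row_l1 Th m \<le> bp$m + bm$m" using feas by (simp add: weak_feasible_def)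
  define dbp :: "real^'p" where "dbp = (\<chi> m. if m = j \<and> tt m \<and> c m \<ge> 0 then 1 else 0)"
  define dbm :: "real^'p" where "dbm = (\<chi> m. if m = j \<and> tt m \<and> c m < 0 then 1 else 0)"
  define D :: "real^'p^'p" where "D = (\<chi> a b. if a = j \<and> b = k then s else 0)"
  have ddjk: "dd (Th$j$k) s = 1" using sg
    by (auto simp: dd_def sgn_if split: if_splits)
  have PD: "\<And>t. True" by simp
  have p1: "\<And>m. dbp$m < 0 \<Longrightarrow> 0 < bp$m" by (simp add: dbp_def split: if_splits)
  have p2: "\<And>m. dbm$m < 0 \<Longrightarrow> 0 < bm$m" by (simp add: dbm_def split: if_splits)
  have p3: "\<And>m. D$m$m = 0" using jk by (auto simp: D_def)
  have rowD: "\<And>m. (\<Sum>b\<in>UNIV. dd (Th$m$b) (D$m$b)) = (if m = j then 1 else 0)"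
  proof -
    fix m
    have "\<And>b. dd (Th$m$b) (D$m$b) = (if b = k \<and> m = j then 1 else 0)"
      using ddjk jk by (auto simp: D_def)
    thus "(\<Sum>b\<in>UNIV. dd (Th$m$b) (D$m$b)) = (if m = j then 1 else 0)"
      by simp
  qed
  have p4: "\<And>m. row_l1 Th m = bp$m + bm$m \<Longrightarrow> (\<Sum>b\<in>UNIV. dd (Th$m$b) (D$m$b)) \<le> dbp$m + dbm$m"
    by (simp add: rowD dbp_def dbm_def tt_def)
  note F = FO2[where P="\<lambda>T. True" and D=D and dbp=dbp and dbm=dbm and y=y and X=X and ?b0.0=b0 and lam=lam, OF feas opt _ p1 p2 p3 p4, simplified]
  define f where "f m = (if tt m then \<bar>c m\<bar> else 0)" for m
  define e where "e m = (if tt m then 1 else (0::real))" for m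
  have s1: "(\<Sum>m\<in>UNIV. (dbp$m - dbm$m) * cc y X b0 bp bm Th m) = f j"
  proof -
    have "\<And>m. (dbp$m - dbm$m) * cc y X b0 bp bm Th m = (if m = j then f m else 0)"
      by (auto simp: dbp_def dbm_def f_def c_def)
    thus ?thesis by simp
  qed
  have s2: "(\<Sum>m\<in>UNIV. dbp$m + dbm$m) = e j"
  proof -
    have "\<And>m. dbp$m + dbm$m = (if m = j then e m else 0)"
      by (auto simp: dbp_def dbm_def e_def)
    thus ?thesis by simp
  qed
  have s3: "(\<Sum>a\<in>UNIV. \<Sum>b\<in>UNIV. D$a$b * gg y X b0 bp bm Th a b) = s * g j k"
  proof -
    have "\<And>a b. D$a$b * gg y X b0 bp bm Th a b = (if (a = j \<and> b = k) \<or> (a = k \<and> b = j) then (if a = j then s * g a b else 0) else 0)"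
      using jk by (auto simp: D_def g_def)
    thus ?thesis using dsum[OF jk, of "\<lambda>a b. if a = j then s * g a b else 0"] jk by simp
  qed
  have s4: "(\<Sum>a\<in>UNIV. \<Sum>b\<in>UNIV - {a}. dd (Th$a$b) (D$a$b)) = 1"
  proof -
    have "\<And>a b. dd (Th$a$b) (D$a$b) = (if (a = j \<and> b = k) \<or> (a = k \<and> b = j) then (if a = j then 1 else 0) else 0)"
      using ddjk jk by (auto simp: D_def)
    thus ?thesis using dsum'[OF jk, of "\<lambda>a b. if a = j then 1 else 0"] jk by simp
  qed
  have I: "0 \<le> - (f j + (1/2) * (s * g j k)) + lam * e j + lam/2 * 1"
    using F unfolding s1 s2 s3 s4 by simp
  have E: "\<And>m. lam * e m - f m = al m"
  proof -
    fix m show "lam * e m - f m = al m" using le[of m]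
      by (cases "row_l1 Th m < bp$m + bm$m") (auto simp: al_def e_def f_def tt_def c_def)
  qed
  show ?thesis using I E[of j] by (simp add: g_def algebra_simps)
qed

lemma edge_weak_dec:
  fixes y :: "real^'n" and X :: "real^'p^'n" and j k :: 'p
  assumes feas: "weak_feasible bp bm Th"
    and opt: "\<forall>bp' bm' Th'. weak_feasible bp' bm' Th' \<and> True \<longrightarrow>
               hier_obj lam y X b0 bp bm Th \<le> hier_obj lam y X b0 bp' bm' Th'"
    and jk: "j \<noteq> k"
    and nz: "Th$j$k \<noteq> 0"
  defines "al \<equiv> \<lambda>m. if row_l1 Th m < bp$m + bm$m then 0 else lam - \<bar>cc y X b0 bp bm Th m\<bar>"
  shows "sgn (Th$j$k) * gg y X b0 bp bm Th j k \<ge> lam + 2 * al j"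
proof -
  define s where "s = sgn (Th$j$k)"
  have Pth: "(\<lambda>T. True) Th" by simp
  note cm = common[where P="\<lambda>T. True", OF feas opt Pth]
  define c where "c = cc y X b0 bp bm Th"
  define g where "g = gg y X b0 bp bm Th"
  define tt where "tt m = (row_l1 Th m = bp$m + bm$m)" for m
  have le: "\<And>m. row_l1 Th m \<le> bp$m + bm$m" using feas by (simp add: weak_feasible_def)
  define dbp :: "real^'p" where "dbp = (\<chi> m. if m = j \<and> tt m \<and> bp$m > 0 then -1 else 0)"
  define dbm :: "real^'p" where "dbm = (\<chi> m. if m = j \<and> tt m \<and> \<not> bp$m > 0 then -1 else 0)"
  define D :: "real^'p^'p" where "D = (\<chi> a b. if a = j \<and> b = k then -s else 0)"
  have ddjk: "dd (Th$j$k) (-s) = -1" using nz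
    by (auto simp: dd_def sgn_if s_def split: if_splits)
  have rowpos: "row_l1 Th j > 0"
  proof -
    have "\<bar>Th$j$k\<bar> \<le> row_l1 Th j" unfolding row_l1_def
      by (rule member_le_sum) auto
    moreover have "\<bar>Th$j$k\<bar> > 0" using nz by auto
    ultimately show ?thesis by linarith
  qed
  have nonneg: "\<And>m. bp$m \<ge> 0" "\<And>m. bm$m \<ge> 0" using feas by (auto simp: weak_feasible_def)
  have p1: "\<And>m. dbp$m < 0 \<Longrightarrow> 0 < bp$m" by (simp add: dbp_def split: if_splits)
  have p2: "\<And>m. dbm$m < 0 \<Longrightarrow> 0 < bm$m"
  proof -
    fix m assume "dbm$m < 0"
    hence h: "m = j \<and> tt m \<and> \<not> bp$m > 0" by (simp add: dbm_def split: if_splits)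
    hence "bp$m = 0" using nonneg[of m] by (metis not_less order.antisym)
    thus "0 < bm$m" using h rowpos by (auto simp: tt_def)
  qed
  have p3: "\<And>m. D$m$m = 0" using jk by (auto simp: D_def)
  have rowD: "\<And>m. (\<Sum>b\<in>UNIV. dd (Th$m$b) (D$m$b)) = (if m = j then -1 else 0)"
  proof -
    fix m
    have "\<And>b. dd (Th$m$b) (D$m$b) = (if b = k \<and> m = j then -1 else 0)"
      using ddjk jk by (auto simp: D_def)
    thus "(\<Sum>b\<in>UNIV. dd (Th$m$b) (D$m$b)) = (if m = j then -1 else 0)"
      by simp
  qed
  have p4: "\<And>m. row_l1 Th m = bp$m + bm$m \<Longrightarrow> (\<Sum>b\<in>UNIV. dd (Th$m$b) (D$m$b)) \<le> dbp$m + dbm$m"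
    by (simp add: rowD dbp_def dbm_def tt_def)
  note F = FO2[where P="\<lambda>T. True" and D=D and dbp=dbp and dbm=dbm and y=y and X=X and ?b0.0=b0 and lam=lam, OF feas opt _ p1 p2 p3 p4, simplified]
  define f where "f m = (if tt m then - \<bar>c m\<bar> else 0)" for m
  define e where "e m = (if tt m then -1 else (0::real))" for m
  have s1: "(\<Sum>m\<in>UNIV. (dbp$m - dbm$m) * cc y X b0 bp bm Th m) = f j"
  proof -
    have "\<And>m. (dbp$m - dbm$m) * cc y X b0 bp bm Th m = (if m = j then f m else 0)"
    proof -
      fix m
      have "bp$m > 0 \<Longrightarrow> c m \<ge> 0" "\<not> bp$m > 0 \<Longrightarrow> tt m \<Longrightarrow> m = j \<Longrightarrow> c m \<le> 0"
        using cm(2)[of m] cm(3)[of m] nonneg[of m] rowpos by (auto simp: c_def tt_def)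
      thus "(dbp$m - dbm$m) * cc y X b0 bp bm Th m = (if m = j then f m else 0)"
        by (auto simp: dbp_def dbm_def f_def c_def)
    qed
    thus ?thesis by simp
  qed
  have s2: "(\<Sum>m\<in>UNIV. dbp$m + dbm$m) = e j"
  proof -
    have "\<And>m. dbp$m + dbm$m = (if m = j then e m else 0)"
      by (auto simp: dbp_def dbm_def e_def)
    thus ?thesis by simp
  qed
  have s3: "(\<Sum>a\<in>UNIV. \<Sum>b\<in>UNIV. D$a$b * gg y X b0 bp bm Th a b) = (-s) * g j k"
  proof -
    have "\<And>a b. D$a$b * gg y X b0 bp bm Th a b = (if (a = j \<and> b = k) \<or> (a = k \<and> b = j) then (if a = j then (-s) * g a b else 0) else 0)"
      using jk by (auto simp: D_def g_def)
    thus ?thesis using dsum[OF jk, of "\<lambda>a b. if a = j then (-s) * g a b else 0"] jk by simp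
  qed
  have s4: "(\<Sum>a\<in>UNIV. \<Sum>b\<in>UNIV - {a}. dd (Th$a$b) (D$a$b)) = -1"
  proof -
    have "\<And>a b. dd (Th$a$b) (D$a$b) = (if (a = j \<and> b = k) \<or> (a = k \<and> b = j) then (if a = j then -1 else 0) else 0)"
      using ddjk jk by (auto simp: D_def)
    thus ?thesis using dsum'[OF jk, of "\<lambda>a b. if a = j then -1 else 0"] jk by simp
  qed
  have I: "0 \<le> - (f j + (1/2) * ((-s) * g j k)) + lam * e j + lam/2 * (-1)"
    using F unfolding s1 s2 s3 s4 by simp
  have E: "\<And>m. lam * e m - f m = - al m"
  proof -
    fix m show "lam * e m - f m = - al m" using le[of m]
      by (cases "row_l1 Th m < bp$m + bm$m") (auto simp: al_def e_def f_def tt_def c_def)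
  qed
  show ?thesis using I E[of j] by (simp add: g_def s_def algebra_simps)
qed



lemma st_pos: "c \<ge> l \<Longrightarrow> l \<ge> 0 \<Longrightarrow> soft_thr c l = c - l"
  by (cases "c = 0") (auto simp: soft_thr_def sgn_if)
lemma st_neg: "c \<le> -l \<Longrightarrow> l \<ge> 0 \<Longrightarrow> soft_thr c l = c + l"
  by (cases "c = 0") (auto simp: soft_thr_def sgn_if)
lemma st_zero: "\<bar>c\<bar> \<le> l \<Longrightarrow> soft_thr c l = 0"
  by (auto simp: soft_thr_def)

lemma main_arith:
  fixes lam c bp bm :: real
  assumes lam: "lam > 0" and nn: "bp \<ge> 0" "bm \<ge> 0" and a: "\<bar>c\<bar> \<le> lam"
    and b: "bp > 0 \<Longrightarrow> c \<ge> 0" "bm > 0 \<Longrightarrow> c \<le> 0"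
    and sl: "S \<Longrightarrow> bp > 0 \<Longrightarrow> c \<ge> lam" "S \<Longrightarrow> bm > 0 \<Longrightarrow> c \<le> -lam"
  shows "bp - bm = soft_thr (c + (bp - bm)) (lam - (if S then 0 else lam - \<bar>c\<bar>))"
proof (cases S)
  case True
  show ?thesis
  proof (cases "bp > 0")
    case bp: True
    hence "c = lam" using sl(1)[OF True] a by simp
    hence "bm = 0" using b(2) nn lam by (cases "bm > 0") auto
    thus ?thesis using True \<open>c = lam\<close> bp lam by (simp add: st_pos)
  next
    case bp: False
    hence bp0: "bp = 0" using nn by simp
    show ?thesis
    proof (cases "bm > 0")
      case True
      hence "c = -lam" using sl(2)[OF \<open>S\<close>] a by simp
      thus ?thesis using True \<open>S\<close> bp0 lam by (simp add: st_neg)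
    next
      case False
      hence "bm = 0" using nn by simp
      thus ?thesis using \<open>S\<close> bp0 a by (simp add: st_zero)
    qed
  qed
next
  case False
  hence th: "lam - (if S then 0 else lam - \<bar>c\<bar>) = \<bar>c\<bar>" by simp
  show ?thesis unfolding th
  proof (cases "bp > 0")
    case bp: True
    hence c0: "c \<ge> 0" using b by simp
    show "bp - bm = soft_thr (c + (bp - bm)) \<bar>c\<bar>"
    proof (cases "bm > 0")
      case True
      hence "c = 0" using b(2) c0 by simp
      thus ?thesis using bp True by (simp add: soft_thr_def sgn_if)
    next
      case False
      hence "bm = 0" using nn by simp
      thus ?thesis using bp c0 by (simp add: st_pos)
    qed
  next
    case bp: False
    hence bp0: "bp = 0" using nn by simp
    show "bp - bm = soft_thr (c + (bp - bm)) \<bar>c\<bar>"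
    proof (cases "bm > 0")
      case True
      hence "c \<le> 0" using b(2) by simp
      thus ?thesis using bp0 True by (simp add: st_neg)
    next
      case False
      hence "bm = 0" using nn by simp
      thus ?thesis using bp0 by (simp add: st_zero)
    qed
  qed
qed

lemma edge_arith:
  fixes L N g th :: real
  assumes L: "L > 0" and N: "N \<ge> 0" "N = 0 \<Longrightarrow> g = 0"
    and z: "th = 0 \<Longrightarrow> \<bar>g\<bar> \<le> L" and nz: "th \<noteq> 0 \<Longrightarrow> sgn th * g = L"
  shows "th = soft_thr (g + th * N) L / N"
proof (cases "th = 0")
  case True thus ?thesis using z by (simp add: st_zero)
next
  case False
  have sg: "sgn th * g = L" using nz False .
  show ?thesis
  proof (cases "th > 0")
    case True
    hence gL: "g = L" using sg by simp
    hence Np: "N > 0" using N L by (cases "N = 0") auto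
    have "soft_thr (g + th * N) L = th * N" using gL True Np L
      by (subst st_pos) (auto intro: mult_nonneg_nonneg)
    thus ?thesis using Np by simp
  next
    case f2: False
    hence neg: "th < 0" using False by simp
    hence gL: "g = -L" using sg by simp
    hence Np: "N > 0" using N L by (cases "N = 0") auto
    have "th * N \<le> 0" using neg Np by (simp add: mult_nonpos_nonneg)
    hence "soft_thr (g + th * N) L = th * N" using gL L
      by (subst st_neg) auto
    thus ?thesis using Np by simp
  qed
qed

lemma weak_arith:
  fixes L1 L2 N g t1 t2 :: real
  assumes L: "L1 > 0" "L2 > 0" and N: "N \<ge> 0" "N = 0 \<Longrightarrow> g = 0"
    and b: "\<bar>g\<bar> \<le> L1" "\<bar>g\<bar> \<le> L2"
    and n1: "t1 \<noteq> 0 \<Longrightarrow> sgn t1 * g = L1" and n2: "t2 \<noteq> 0 \<Longrightarrow> sgn t2 * g = L2"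
  shows "(t1 + t2)/2 = soft_thr (g + ((t1 + t2)/2) * N) (min L1 L2) / N"
proof -
  define a where "a = (t1 + t2)/2"
  have "\<bar>g\<bar> \<le> min L1 L2" using b by simp
  have "a = soft_thr (g + a * N) (min L1 L2) / N"
  proof (cases "a = 0")
    case True
    have "soft_thr (g + a * N) (min L1 L2) = 0" using True \<open>\<bar>g\<bar> \<le> min L1 L2\<close> by (intro st_zero) simp
    thus ?thesis using True by simp
  next
    case False
    show ?thesis
    proof (cases "a > 0")
      case True
      hence "t1 > 0 \<or> t2 > 0" unfolding a_def by (auto simp: field_simps)
      hence gL: "g = min L1 L2" using n1 n2 b by (auto simp: min_def)
      hence Np: "N > 0" using N L by (cases "N = 0") (auto simp: min_def split: if_splits)
      have "soft_thr (g + a * N) (min L1 L2) = a * N" using gL True Np L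
        by (subst st_pos) (auto intro: mult_nonneg_nonneg)
      thus ?thesis using Np by simp
    next
      case f2: False
      hence neg: "a < 0" using False by simp
      hence "t1 < 0 \<or> t2 < 0" unfolding a_def by (auto simp: field_simps)
      hence gL: "g = - min L1 L2" using n1 n2 b by (auto simp: min_def)
      hence Np: "N > 0" using N L by (cases "N = 0") (auto simp: min_def split: if_splits)
      have "a * N \<le> 0" using neg Np by (simp add: mult_nonpos_nonneg)
      hence "soft_thr (g + a * N) (min L1 L2) = a * N" using gL L
        by (subst st_neg) auto
      thus ?thesis using Np by simp
    qed
  qed
  thus ?thesis by (simp add: a_def)
qed



lemma res_main_dot: "column j X \<bullet> res_main y X b0 bp bm Th j = cc y X b0 bp bm Th j + (bp$j - bm$j) * (norm (column j X))\<^sup>2"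
  by (simp add: res_main_def cc_def inner_add_right power2_norm_eq_inner)

lemma res_int_dot: "hprod (column j X) (column k X) \<bullet> res_int y X b0 bp bm Th j k
   = gg y X b0 bp bm Th j k + ((Th$j$k + Th$k$j)/2) * (norm (hprod (column j X) (column k X)))\<^sup>2"
  by (simp add: res_int_def gg_def inner_add_right power2_norm_eq_inner)

lemma gg_zero: "norm (hprod (column j X) (column k X)) = 0 \<Longrightarrow> gg y X b0 bp bm Th j k = 0"
  by (simp add: gg_def)

theorem mainTheorem1:
  fixes y :: "real^'n" and X :: "real^'p^'n" and lam :: real
    and b0 :: real and bp bm :: "real^'p" and Th :: "real^'p^'p"
  assumes unit_cols: "\<forall>j. norm (column j X) = 1"
    and lam_pos: "lam > 0"
  shows
    "(strong_hier_solution lam y X b0 bp bm Th \<longrightarrow>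
       (\<exists>\<alpha> :: 'p \<Rightarrow> real.
          (\<forall>j. \<alpha> j \<ge> 0) \<and>
          (\<forall>j. row_l1 Th j < bp $ j + bm $ j \<longrightarrow> \<alpha> j = 0) \<and>
          (\<forall>j. bp $ j - bm $ j
                 = soft_thr (column j X \<bullet> res_main y X b0 bp bm Th j) (lam - \<alpha> j)) \<and>
          (\<forall>j k. k \<noteq> j \<longrightarrow>
             Th $ j $ k
               = soft_thr (hprod (column j X) (column k X) \<bullet> res_int y X b0 bp bm Th j k)
                          (lam + \<alpha> j + \<alpha> k)
                 / (norm (hprod (column j X) (column k X)))\<^sup>2)))
     \<and>
     (weak_hier_solution lam y X b0 bp bm Th \<longrightarrow>
       (\<exists>\<alpha> :: 'p \<Rightarrow> real.
          (\<forall>j. \<alpha> j \<ge> 0) \<and>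
          (\<forall>j. row_l1 Th j < bp $ j + bm $ j \<longrightarrow> \<alpha> j = 0) \<and>
          (\<forall>j. bp $ j - bm $ j
                 = soft_thr (column j X \<bullet> res_main y X b0 bp bm Th j) (lam - \<alpha> j)) \<and>
          (\<forall>j k. k \<noteq> j \<longrightarrow>
             (Th $ j $ k + Th $ k $ j) / 2
               = soft_thr (hprod (column j X) (column k X) \<bullet> res_int y X b0 bp bm Th j k)
                          (lam + 2 * min (\<alpha> j) (\<alpha> k))
                 / (norm (hprod (column j X) (column k X)))\<^sup>2)))"
proof -
  define al where "al = (\<lambda>m. if row_l1 Th m < bp$m + bm$m then 0 else lam - \<bar>cc y X b0 bp bm Th m\<bar>)"
  define c where "c = cc y X b0 bp bm Th"
  define g where "g = gg y X b0 bp bm Th"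
  have generic: "(\<forall>j. al j \<ge> 0) \<and>
          (\<forall>j. row_l1 Th j < bp $ j + bm $ j \<longrightarrow> al j = 0) \<and>
          (\<forall>j. bp $ j - bm $ j
                 = soft_thr (column j X \<bullet> res_main y X b0 bp bm Th j) (lam - al j))"
    if feas: "weak_feasible bp bm Th"
      and opt: "\<forall>bp' bm' Th'. weak_feasible bp' bm' Th' \<and> P Th' \<longrightarrow>
               hier_obj lam y X b0 bp bm Th \<le> hier_obj lam y X b0 bp' bm' Th'"
      and PTh: "P Th" for P
  proof (intro conjI allI impI)
    fix j
    note cm = common[where P=P, OF feas opt PTh, of j]
    show "al j \<ge> 0" using cm(1) by (simp add: al_def)
    show "row_l1 Th j < bp $ j + bm $ j \<Longrightarrow> al j = 0" by (simp add: al_def)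
    have nn: "bp$j \<ge> 0" "bm$j \<ge> 0" using feas by (auto simp: weak_feasible_def)
    have "bp$j - bm$j = soft_thr (cc y X b0 bp bm Th j + (bp$j - bm$j))
        (lam - (if row_l1 Th j < bp $ j + bm $ j then 0 else lam - \<bar>cc y X b0 bp bm Th j\<bar>))"
      by (rule main_arith[OF lam_pos nn cm])
    thus "bp $ j - bm $ j = soft_thr (column j X \<bullet> res_main y X b0 bp bm Th j) (lam - al j)"
      using unit_cols by (simp add: res_main_dot al_def)
  qed
  have alnn: "\<And>j. al j \<ge> 0" if feas: "weak_feasible bp bm Th"
      and opt: "\<forall>bp' bm' Th'. weak_feasible bp' bm' Th' \<and> P Th' \<longrightarrow>
               hier_obj lam y X b0 bp bm Th \<le> hier_obj lam y X b0 bp' bm' Th'"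
      and PTh: "P Th" for P
    using generic[OF feas opt PTh] by blast
  have strong: "\<exists>\<alpha> :: 'p \<Rightarrow> real.
          (\<forall>j. \<alpha> j \<ge> 0) \<and>
          (\<forall>j. row_l1 Th j < bp $ j + bm $ j \<longrightarrow> \<alpha> j = 0) \<and>
          (\<forall>j. bp $ j - bm $ j
                 = soft_thr (column j X \<bullet> res_main y X b0 bp bm Th j) (lam - \<alpha> j)) \<and>
          (\<forall>j k. k \<noteq> j \<longrightarrow>
             Th $ j $ k
               = soft_thr (hprod (column j X) (column k X) \<bullet> res_int y X b0 bp bm Th j k)
                          (lam + \<alpha> j + \<alpha> k)
                 / (norm (hprod (column j X) (column k X)))\<^sup>2)"
    if sol: "strong_hier_solution lam y X b0 bp bm Th"
  proof -
    have feas: "weak_feasible bp bm Th" and sym: "transpose Th = Th"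
      using sol by (auto simp: strong_hier_solution_def strong_feasible_def)
    have opt: "\<forall>bp' bm' Th'. weak_feasible bp' bm' Th' \<and> transpose Th' = Th' \<longrightarrow>
               hier_obj lam y X b0 bp bm Th \<le> hier_obj lam y X b0 bp' bm' Th'"
      using sol by (auto simp: strong_hier_solution_def strong_feasible_def)
    have symTh: "\<And>a b. Th$a$b = Th$b$a" using sym by (metis transpose_def vec_lambda_beta)
    have P: "(\<lambda>T. transpose T = T) Th" using sym by simp
    note al_nn = alnn[OF feas opt P]
    show ?thesis
    proof (rule exI[of _ al], intro conjI)
      show "\<forall>j. 0 \<le> al j" "\<forall>j. row_l1 Th j < bp $ j + bm $ j \<longrightarrow> al j = 0"
        "\<forall>j. bp $ j - bm $ j = soft_thr (column j X \<bullet> res_main y X b0 bp bm Th j) (lam - al j)"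
        using generic[OF feas opt P] by blast+
      show "\<forall>j k. k \<noteq> j \<longrightarrow> Th $ j $ k
               = soft_thr (hprod (column j X) (column k X) \<bullet> res_int y X b0 bp bm Th j k)
                          (lam + al j + al k)
                 / (norm (hprod (column j X) (column k X)))\<^sup>2"
      proof (intro allI impI)
        fix j k :: 'p assume kj: "k \<noteq> j"
        hence jk: "j \<noteq> k" by simp
        note inc = edge_strong[OF feas opt sym jk, folded al_def]
        note dec = edge_strong_dec[OF feas opt sym jk, folded al_def]
        define N where "N = (norm (hprod (column j X) (column k X)))\<^sup>2"
        have L: "lam + al j + al k > 0" using al_nn[of j] al_nn[of k] lam_pos by linarith
        have "Th$j$k = soft_thr (g j k + Th$j$k * N) (lam + al j + al k) / N"
        proof (rule edge_arith[OF L])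
          show "N \<ge> 0" by (simp add: N_def)
          show "N = 0 \<Longrightarrow> g j k = 0" by (simp add: N_def g_def gg_zero)
          show "Th$j$k = 0 \<Longrightarrow> \<bar>g j k\<bar> \<le> lam + al j + al k"
            using inc[of 1] inc[of "-1"] by (auto simp: g_def abs_if al_def)
          show "Th$j$k \<noteq> 0 \<Longrightarrow> sgn (Th$j$k) * g j k = lam + al j + al k"
            using inc[of "sgn (Th$j$k)"] dec by (auto simp: g_def abs_sgn_eq al_def)
        qed
        thus "Th $ j $ k
               = soft_thr (hprod (column j X) (column k X) \<bullet> res_int y X b0 bp bm Th j k)
                          (lam + al j + al k)
                 / (norm (hprod (column j X) (column k X)))\<^sup>2"
          using symTh[of k j] by (simp add: res_int_dot N_def g_def)
      qed
    qed
  qed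
  have weak: "\<exists>\<alpha> :: 'p \<Rightarrow> real.
          (\<forall>j. \<alpha> j \<ge> 0) \<and>
          (\<forall>j. row_l1 Th j < bp $ j + bm $ j \<longrightarrow> \<alpha> j = 0) \<and>
          (\<forall>j. bp $ j - bm $ j
                 = soft_thr (column j X \<bullet> res_main y X b0 bp bm Th j) (lam - \<alpha> j)) \<and>
          (\<forall>j k. k \<noteq> j \<longrightarrow>
             (Th $ j $ k + Th $ k $ j) / 2
               = soft_thr (hprod (column j X) (column k X) \<bullet> res_int y X b0 bp bm Th j k)
                          (lam + 2 * min (\<alpha> j) (\<alpha> k))
                 / (norm (hprod (column j X) (column k X)))\<^sup>2)"
    if sol: "weak_hier_solution lam y X b0 bp bm Th"
  proof -
    have feas: "weak_feasible bp bm Th"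
      using sol by (auto simp: weak_hier_solution_def)
    have opt: "\<forall>bp' bm' Th'. weak_feasible bp' bm' Th' \<and> True \<longrightarrow>
               hier_obj lam y X b0 bp bm Th \<le> hier_obj lam y X b0 bp' bm' Th'"
      using sol by (auto simp: weak_hier_solution_def)
    have P: "(\<lambda>T. True) Th" by simp
    note al_nn = alnn[OF feas opt P]
    show ?thesis
    proof (rule exI[of _ al], intro conjI)
      show "\<forall>j. 0 \<le> al j" "\<forall>j. row_l1 Th j < bp $ j + bm $ j \<longrightarrow> al j = 0"
        "\<forall>j. bp $ j - bm $ j = soft_thr (column j X \<bullet> res_main y X b0 bp bm Th j) (lam - al j)"
        using generic[OF feas opt P] by blast+
      show "\<forall>j k. k \<noteq> j \<longrightarrow> (Th $ j $ k + Th $ k $ j) / 2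
               = soft_thr (hprod (column j X) (column k X) \<bullet> res_int y X b0 bp bm Th j k)
                          (lam + 2 * min (al j) (al k))
                 / (norm (hprod (column j X) (column k X)))\<^sup>2"
      proof (intro allI impI)
        fix j k :: 'p assume kj: "k \<noteq> j"
        hence jk: "j \<noteq> k" by simp
        note inc1 = edge_weak[OF feas opt jk, folded al_def]
        note dec1 = edge_weak_dec[OF feas opt jk, folded al_def]
        note inc2 = edge_weak[OF feas opt kj, folded al_def]
        note dec2 = edge_weak_dec[OF feas opt kj, folded al_def]
        have gs: "gg y X b0 bp bm Th k j = g j k" using gg_sym by (simp add: g_def)
        define N where "N = (norm (hprod (column j X) (column k X)))\<^sup>2"
        have L1: "lam + 2 * al j > 0" using al_nn[of j] lam_pos by linarith
        have L2: "lam + 2 * al k > 0" using al_nn[of k] lam_pos by linarith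
        have n1: "Th$j$k \<noteq> 0 \<Longrightarrow> sgn (Th$j$k) * g j k = lam + 2 * al j"
          using inc1[of "sgn (Th$j$k)"] dec1 by (auto simp: g_def abs_sgn_eq al_def)
        have n2: "Th$k$j \<noteq> 0 \<Longrightarrow> sgn (Th$k$j) * g j k = lam + 2 * al k"
          using inc2[of "sgn (Th$k$j)"] dec2 gs by (auto simp: g_def abs_sgn_eq al_def)
        have b1: "\<bar>g j k\<bar> \<le> lam + 2 * al j"
        proof (cases "Th$j$k = 0")
          case True thus ?thesis using inc1[of 1] inc1[of "-1"] by (auto simp: g_def abs_if al_def)
        next
          case False
          hence "sgn (Th$j$k) * g j k = lam + 2 * al j" using n1 by simp
          hence "\<bar>g j k\<bar> = lam + 2 * al j" using False L1 by (metis abs_mult abs_sgn_eq_1 abs_of_pos mult_1)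
          thus ?thesis by simp
        qed
        have b2: "\<bar>g j k\<bar> \<le> lam + 2 * al k"
        proof (cases "Th$k$j = 0")
          case True thus ?thesis using inc2[of 1] inc2[of "-1"] gs by (auto simp: g_def abs_if al_def)
        next
          case False
          hence "sgn (Th$k$j) * g j k = lam + 2 * al k" using n2 by simp
          hence "\<bar>g j k\<bar> = lam + 2 * al k" using False L2 by (metis abs_mult abs_sgn_eq_1 abs_of_pos mult_1)
          thus ?thesis by simp
        qed
        have "(Th$j$k + Th$k$j)/2 = soft_thr (g j k + ((Th$j$k + Th$k$j)/2) * N) (min (lam + 2 * al j) (lam + 2 * al k)) / N"
          by (rule weak_arith[OF L1 L2 _ _ b1 b2 n1 n2]) (auto simp: N_def g_def gg_zero)
        moreover have "min (lam + 2 * al j) (lam + 2 * al k) = lam + 2 * min (al j) (al k)"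
          by (simp add: min_def)
        ultimately show "(Th $ j $ k + Th $ k $ j) / 2
               = soft_thr (hprod (column j X) (column k X) \<bullet> res_int y X b0 bp bm Th j k)
                          (lam + 2 * min (al j) (al k))
                 / (norm (hprod (column j X) (column k X)))\<^sup>2"
          by (simp add: res_int_dot N_def g_def)
      qed
    qed
  qed
  show ?thesis using strong weak by blast
qed


end
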